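(* Let $M$ be a metric space with metric $d$, let $s\in M$ and let $r>1$. For $n\in\mathbb{Z}$ let $M_n=\{s\}\cup\{p\in M : d(s,p)\in[r^n,r^{n+1})\}$ (with the restricted metric). If for each $n\in\mathbb{Z}$ the infinite server problem on $(M_n,s)$ admits a strictly $\rho$-competitive online algorithm, then the infinite server problem on $(M,s)$ admits a strictly $\frac{4r-1}{r-1}\rho$-competitive online algorithm.
   Context: Infinite server problem on $(M,s)$: $M$ is a metric space and $s\in M$ the source; an unbounded number of servers initially reside at $s$. A finite sequence of requests (points of $M$) is revealed one by one; each must be served immediately, without knowledge of future requests, by moving some server to it; the cost is the total distance traveled. An online algorithm $ALG$ is strictly $\rho$-competitive if $ALG(\sigma)\le\rho\,OPT(\sigma)$ for every request sequence $\sigma$, where $OPT(\sigma)$ is the optimal offline cost. *)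

theory Defs
  imports "HOL-Analysis.Analysis"
begin

text \<open>Servers are indexed by nat; initially every server is at s.  A step is a pair
  (request p, index k of the server moved to p); its cost is the distance travelled.\<close>

fun serve_cost :: "(nat \<Rightarrow> 'a::metric_space) \<Rightarrow> ('a \<times> nat) list \<Rightarrow> real" where
  "serve_cost c [] = 0"
| "serve_cost c ((p, k) # rest) = dist (c k) p + serve_cost (c(k := p)) rest"

definition schedule_cost :: "'a::metric_space \<Rightarrow> ('a \<times> nat) list \<Rightarrow> real" where
  "schedule_cost s steps = serve_cost (\<lambda>_. s) steps"

definition OPT :: "'a::metric_space \<Rightarrow> 'a list \<Rightarrow> real" where
  "OPT s \<sigma> = Inf {schedule_cost s (zip \<sigma> ks) | ks. length ks = length \<sigma>}"

text \<open>A (deterministic) online algorithm chooses, given the requests revealed so far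
  (the last one being the current request), which server serves the current request.\<close>
type_synonym 'a online_alg = "'a list \<Rightarrow> nat"

definition alg_choices :: "'a online_alg \<Rightarrow> 'a list \<Rightarrow> nat list" where
  "alg_choices A \<sigma> = map (\<lambda>i. A (take (Suc i) \<sigma>)) [0..<length \<sigma>]"

definition ALG_cost :: "'a::metric_space \<Rightarrow> 'a online_alg \<Rightarrow> 'a list \<Rightarrow> real" where
  "ALG_cost s A \<sigma> = schedule_cost s (zip \<sigma> (alg_choices A \<sigma>))"

definition strictly_competitive ::
  "'a::metric_space set \<Rightarrow> 'a \<Rightarrow> real \<Rightarrow> 'a online_alg \<Rightarrow> bool" where
  "strictly_competitive M s \<rho> A \<longleftrightarrow>
     (\<forall>\<sigma>. set \<sigma> \<subseteq> M \<longrightarrow> ALG_cost s A \<sigma> \<le> \<rho> * OPT s \<sigma>)"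

definition shell :: "'a::metric_space set \<Rightarrow> 'a \<Rightarrow> real \<Rightarrow> int \<Rightarrow> 'a set" where
  "shell M s r n = {s} \<union> {p \<in> M. r powi n \<le> dist s p \<and> dist s p < r powi (n + 1)}"

end

theory Submission
  imports Defs
begin


lemma powi_shift: "(r::real) > 1 \<Longrightarrow> r powi (m+1) = r * r powi m"
  by (simp add: power_int_add_1')

context
  fixes s :: "'a::metric_space" and r :: real
  assumes r1: "1 < r"
begin

definition sh :: "'a \<Rightarrow> int" where "sh p = \<lfloor>log r (dist s p)\<rfloor>"

lemma sh_bounds:
  assumes "p \<noteq> s"
  shows "r powi (sh p) \<le> dist s p \<and> dist s p < r powi (sh p + 1)"
proof -
  have d: "dist s p > 0" using assms by simp
  have a: "real_of_int (sh p) \<le> log r (dist s p)" unfolding sh_def by linarith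
  have b: "log r (dist s p) < real_of_int (sh p + 1)" unfolding sh_def by linarith
  have "r powr real_of_int (sh p) \<le> dist s p" using a le_log_iff[OF r1 d] by simp
  moreover have "dist s p < r powr real_of_int (sh p + 1)" using b log_less_iff[OF r1 d] by simp
  ultimately show ?thesis using r1 powr_real_of_int'[of r "sh p + 1"] powr_real_of_int'[of r "sh p"] by simp
qed

definition AA :: real where "AA = r / (r - 1)"

lemma AA_ge1: "AA \<ge> 1" using r1 by (simp add: AA_def field_simps)

lemma AA_eq: "(AA - 1) * (r * x) = AA * x"
  using r1 by (simp add: AA_def field_simps)

definition g :: "int \<Rightarrow> real \<Rightarrow> real" where
  "g n x = max 0 (min (AA * (x - r powi (n - 1))) (min x (r powi (n + 1) - AA * (x - r powi (n + 1)))))"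

lemma g_nonneg: "g n x \<ge> 0" by (simp add: g_def)

lemma g_zero: "g n 0 = 0"
proof -
  have "r powi (n - 1) > 0" using r1 by simp
  then show ?thesis using AA_ge1 by (simp add: g_def mult_pos_pos)
qed

lemma minmax_lip:
  fixes u1 u2 u3 v1 v2 v3 L :: real
  assumes "\<bar>u1 - v1\<bar> \<le> L" "\<bar>u2 - v2\<bar> \<le> L" "\<bar>u3 - v3\<bar> \<le> L"
  shows "\<bar>max 0 (min u1 (min u2 u3)) - max 0 (min v1 (min v2 v3))\<bar> \<le> L"
  using assms by (auto simp: min_def max_def abs_if split: if_splits)

lemma g_lip: "\<bar>g n x - g n y\<bar> \<le> AA * \<bar>x - y\<bar>"
proof -
  have A: "AA \<ge> 1" by (rule AA_ge1)
  have "\<bar>AA * (x - r powi (n - 1)) - AA * (y - r powi (n - 1))\<bar> = AA * \<bar>x - y\<bar>"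
    using A by (simp add: abs_mult flip: right_diff_distrib)
  moreover have "\<bar>x - y\<bar> \<le> AA * \<bar>x - y\<bar>" using A by (simp add: mult_le_cancel_right1)
  moreover have "\<bar>(r powi (n + 1) - AA * (x - r powi (n + 1))) - (r powi (n + 1) - AA * (y - r powi (n + 1)))\<bar> = AA * \<bar>x - y\<bar>"
    using A by (simp add: abs_mult abs_minus_commute flip: right_diff_distrib)
  ultimately show ?thesis unfolding g_def by (intro minmax_lip) auto
qed

lemma g_entry:
  assumes "r powi m \<le> y" "y < r powi (m + 1)"
  shows "y - AA * \<bar>y - x\<bar> \<le> g m x"
proof -
  have A: "AA \<ge> 1" by (rule AA_ge1)
  have pm: "r powi m = r * r powi (m - 1)" using powi_shift[OF r1, of "m - 1"] by simp
  have e: "(AA - 1) * r powi m = AA * r powi (m - 1)" using AA_eq[of "r powi (m-1)"] pm by simp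
  have ax: "AA * (y - x) \<le> AA * \<bar>y - x\<bar>" "AA * (x - y) \<le> AA * \<bar>y - x\<bar>"
    using A by (auto intro: mult_left_mono)
  have "(AA - 1) * r powi m \<le> (AA - 1) * y" using A assms by (intro mult_left_mono) auto
  then have 1: "y - AA * \<bar>y - x\<bar> \<le> AA * (x - r powi (m - 1))"
    using e ax by (simp add: algebra_simps)
  have 2: "y - AA * \<bar>y - x\<bar> \<le> x"
  proof -
    have "\<bar>y - x\<bar> \<le> AA * \<bar>y - x\<bar>" using A by (simp add: mult_le_cancel_right1)
    then show ?thesis by linarith
  qed
  have "AA * y \<le> AA * r powi (m + 1)" using A assms by (intro mult_left_mono) auto
  then have 3: "y - AA * \<bar>y - x\<bar> \<le> r powi (m + 1) - AA * (x - r powi (m + 1))"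
    using ax assms by (simp add: algebra_simps)
  show ?thesis unfolding g_def using 1 2 3 by linarith
qed

lemma g_far:
  assumes "r powi m \<le> y" "y < r powi (m + 1)" "n \<noteq> m - 1" "n \<noteq> m" "n \<noteq> m + 1"
  shows "g n y = 0"
proof (cases "n \<ge> m + 2")
  case True
  have "r powi (m + 1) \<le> r powi (n - 1)" using True r1 by (intro power_int_increasing) auto
  then have "AA * (y - r powi (n - 1)) \<le> 0" using assms AA_ge1 by (simp add: mult_nonneg_nonpos)
  then show ?thesis unfolding g_def by linarith
next
  case False
  then have nm: "n + 1 \<le> m - 1" using assms by auto
  have "r powi (n + 1) \<le> r powi (m - 1)" using nm r1 by (intro power_int_increasing) auto
  have pm: "r powi m = r * r powi (m - 1)" using powi_shift[OF r1, of "m - 1"] by simp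
  have pos: "r powi (m - 1) > 0" using r1 by simp
  have "(1 + AA) * r powi (n + 1) \<le> (1 + AA) * r powi (m - 1)"
    using \<open>r powi (n + 1) \<le> r powi (m - 1)\<close> AA_ge1 by (intro mult_left_mono) auto
  also have "(1 + AA) * r powi (m - 1) \<le> AA * r powi m"
  proof -
    have "(1 + AA) = (2*r - 1)/(r-1)" "AA * r = r*r/(r-1)" using r1 by (auto simp: AA_def field_simps)
    moreover have "(2*r - 1)/(r-1) \<le> r*r/(r-1)"
    proof (rule divide_right_mono)
      have "0 \<le> (r-1)*(r-1)" by simp
      then show "2*r - 1 \<le> r*r" by (simp add: algebra_simps)
    qed (use r1 in simp)
    ultimately have "1 + AA \<le> AA * r" by simp
    then show ?thesis using pm pos by (simp add: mult.assoc[symmetric] mult_right_mono mult.commute[of AA])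
  qed
  also have "AA * r powi m \<le> AA * y" using assms AA_ge1 by (intro mult_left_mono) auto
  finally have "r powi (n + 1) - AA * (y - r powi (n + 1)) \<le> 0" by (simp add: algebra_simps)
  then show ?thesis unfolding g_def by linarith
qed

end



lemma serve_cost_nonneg: "serve_cost c steps \<ge> 0"
  by (induction steps arbitrary: c) (auto simp: add_nonneg_nonneg)

definition V :: "(nat \<Rightarrow> 'a::metric_space) \<Rightarrow> 'a list \<Rightarrow> real" where
  "V c \<tau> = Inf {serve_cost c (zip \<tau> ks) | ks. length ks = length \<tau>}"

lemma V_set_ne: "{serve_cost c (zip \<tau> ks) | ks. length ks = length \<tau>} \<noteq> {}"
  by (auto intro: exI[of _ "replicate (length \<tau>) 0"])

lemma V_bdd: "bdd_below {serve_cost c (zip \<tau> ks) | ks. length ks = length \<tau>}"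
  by (rule bdd_belowI[of _ 0]) (auto simp: serve_cost_nonneg)

lemma V_nonneg: "V c \<tau> \<ge> 0"
  unfolding V_def by (rule cInf_greatest[OF V_set_ne]) (auto simp: serve_cost_nonneg)

lemma V_le: "length ks = length \<tau> \<Longrightarrow> V c \<tau> \<le> serve_cost c (zip \<tau> ks)"
  unfolding V_def by (rule cInf_lower[OF _ V_bdd]) auto

lemma V_cons_le: "V c (p # \<tau>) \<le> dist (c k) p + V (c(k := p)) \<tau>"
proof -
  have "V c (p # \<tau>) - dist (c k) p \<le> V (c(k := p)) \<tau>"
    unfolding V_def[of "c(k:=p)"]
  proof (rule cInf_greatest[OF V_set_ne], clarify)
    fix ks :: "nat list" assume l: "length ks = length \<tau>"
    have "V c (p # \<tau>) \<le> serve_cost c (zip (p # \<tau>) (k # ks))" using l by (intro V_le) auto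
    then show "V c (p # \<tau>) - dist (c k) p \<le> serve_cost (c(k := p)) (zip \<tau> ks)" by simp
  qed
  then show ?thesis by simp
qed

lemma OPT_V: "OPT s \<sigma> = V (\<lambda>_. s) \<sigma>"
  unfolding OPT_def V_def schedule_cost_def by simp

context
  fixes s :: "'a::metric_space" and r :: real
  assumes r1: "1 < r"
begin

definition enc :: "nat \<Rightarrow> nat \<Rightarrow> nat" where "enc k e = to_nat (k, e)"

lemma enc_eq[simp]: "enc k e = enc k' e' \<longleftrightarrow> k = k' \<and> e = e'"
  by (simp add: enc_def)

definition sub :: "int \<Rightarrow> 'a list \<Rightarrow> 'a list" where
  "sub n xs = filter (\<lambda>p. p \<noteq> s \<and> sh s r p = n) xs"

definition phi :: "int \<Rightarrow> 'a \<Rightarrow> 'a \<Rightarrow> real" where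
  "phi n q c = min (dist q c) (g r n (dist s c))"

lemma phi_nonneg: "phi n q c \<ge> 0"
  unfolding phi_def using g_nonneg[OF r1] by simp

lemma phi_s: "phi n q s = 0"
  unfolding phi_def using g_zero[OF r1] by simp

lemma phi_self: "phi n p p = 0"
  unfolding phi_def using g_nonneg[OF r1] by simp

lemma phi_lip: "phi n q p \<le> phi n q x + AA r * dist x p"
proof -
  have A: "AA r \<ge> 1" by (rule AA_ge1[OF r1])
  have d1: "\<bar>dist q p - dist q x\<bar> \<le> AA r * dist x p"
  proof -
    have "\<bar>dist q p - dist q x\<bar> \<le> dist x p" by (metis abs_dist_diff_le dist_commute)
    also have "\<dots> \<le> AA r * dist x p" using A by (simp add: mult_le_cancel_right1)
    finally show ?thesis .
  qed
  have "\<bar>dist s p - dist s x\<bar> \<le> dist x p" by (metis abs_dist_diff_le dist_commute)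
  then have "AA r * \<bar>dist s p - dist s x\<bar> \<le> AA r * dist x p" using A by (intro mult_left_mono) auto
  then have d2: "\<bar>g r n (dist s p) - g r n (dist s x)\<bar> \<le> AA r * dist x p"
    using g_lip[OF r1, of n "dist s p" "dist s x"] by linarith
  show ?thesis unfolding phi_def using d1 d2 by (auto simp: min_def abs_if split: if_splits)
qed

lemma phi_far:
  assumes "p \<noteq> s" "n \<noteq> sh s r p - 1" "n \<noteq> sh s r p" "n \<noteq> sh s r p + 1"
  shows "phi n q p = 0"
proof -
  have "g r n (dist s p) = 0" using sh_bounds[OF r1 assms(1)] assms by (intro g_far[OF r1]) auto
  then show ?thesis by (simp add: phi_def)
qed

definition invst :: "(int \<Rightarrow> nat \<Rightarrow> 'a) \<Rightarrow> (int \<Rightarrow> nat \<Rightarrow> nat) \<Rightarrow> bool" where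
  "invst C E \<longleftrightarrow> (\<forall>n k e. E n k < e \<longrightarrow> C n (enc k e) = s)"

lemma step_choice:
  assumes invst: "invst C E" and ps: "p \<noteq> s" and m: "m = sh s r p"
  shows "\<exists>C' E' cost. invst C' E' \<and> (\<forall>n. n \<noteq> m \<longrightarrow> C' n = C n \<and> E' n = E n)
     \<and> (\<forall>L. V (C m) (p # L) \<le> cost + V (C' m) L)
     \<and> C' m (enc k (E' m k)) = p
     \<and> (\<forall>k'. k' \<noteq> k \<longrightarrow> C' m (enc k' (E' m k')) = C m (enc k' (E m k')))
     \<and> cost - phi m (C m (enc k (E m k))) x \<le> AA r * dist x p"
proof -
  define q where "q = C m (enc k (E m k))"
  have A: "AA r \<ge> 1" by (rule AA_ge1[OF r1])
  show ?thesis
  proof (cases "dist q x \<le> g r m (dist s x)")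
    case True
    define C' where "C' = C(m := (C m)(enc k (E m k) := p))"
    have "invst C' E" using invst unfolding invst_def C'_def by auto
    moreover have "\<forall>L. V (C m) (p # L) \<le> dist q p + V (C' m) L"
      using V_cons_le[of "C m" p _ "enc k (E m k)"] by (simp add: C'_def q_def)
    moreover have "dist q p - phi m q x \<le> AA r * dist x p"
    proof -
      have "phi m q x = dist q x" using True by (simp add: phi_def)
      moreover have "dist q p \<le> dist q x + dist x p" by (rule dist_triangle)
      moreover have "dist x p \<le> AA r * dist x p" using A by (simp add: mult_le_cancel_right1)
      ultimately show ?thesis by linarith
    qed
    ultimately show ?thesis
      by (intro exI[of _ C'] exI[of _ E] exI[of _ "dist q p"]) (auto simp: C'_def q_def)
  next
    case False
    define j where "j = enc k (Suc (E m k))"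
    define C' where "C' = C(m := (C m)(j := p))"
    define E' where "E' = E(m := (E m)(k := Suc (E m k)))"
    have Cj: "C m j = s" using invst unfolding invst_def j_def by auto
    have "invst C' E'" using invst unfolding invst_def C'_def E'_def j_def
      by (auto split: if_splits)
    moreover have "\<forall>L. V (C m) (p # L) \<le> dist s p + V (C' m) L"
      using V_cons_le[of "C m" p _ j] Cj by (simp add: C'_def)
    moreover have "dist s p - phi m q x \<le> AA r * dist x p"
    proof -
      have "phi m q x = g r m (dist s x)" using False by (simp add: phi_def)
      moreover have "dist s p - AA r * \<bar>dist s p - dist s x\<bar> \<le> g r m (dist s x)"
        using sh_bounds[OF r1 ps] m by (intro g_entry[OF r1]) auto
      moreover have "\<bar>dist s p - dist s x\<bar> \<le> dist x p" by (metis abs_dist_diff_le dist_commute)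
      then have "AA r * \<bar>dist s p - dist s x\<bar> \<le> AA r * dist x p" using A by (intro mult_left_mono) auto
      ultimately show ?thesis by linarith
    qed
    ultimately show ?thesis
      by (intro exI[of _ C'] exI[of _ E'] exI[of _ "dist s p"]) (auto simp: C'_def E'_def q_def j_def)
  qed
qed

end



context
  fixes s :: "'a::metric_space" and r :: real
  assumes r1: "1 < r"
begin

definition Phi :: "int set \<Rightarrow> nat set \<Rightarrow> (nat \<Rightarrow> 'a) \<Rightarrow> (int \<Rightarrow> nat \<Rightarrow> 'a) \<Rightarrow> (int \<Rightarrow> nat \<Rightarrow> nat) \<Rightarrow> real" where
  "Phi N K c C E = (\<Sum>k\<in>K. \<Sum>n\<in>N. phi s r n (C n (enc k (E n k))) (c k))"

lemma main_ineq:
  assumes "invst s C E" "set (map snd steps) \<subseteq> K" "finite K" "finite N"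
    "\<forall>p\<in>set (map fst steps). p \<noteq> s \<longrightarrow> sh s r p - 1 \<in> N \<and> sh s r p \<in> N \<and> sh s r p + 1 \<in> N"
  shows "(\<Sum>n\<in>N. V (C n) (sub s r n (map fst steps))) \<le> 3 * AA r * serve_cost c steps + Phi N K c C E"
  using assms(1,2,5)
proof (induction steps arbitrary: c C E)
  case Nil
  have "Phi N K c C E \<ge> 0" unfolding Phi_def by (intro sum_nonneg) (auto simp: phi_nonneg[OF r1])
  have "V (C n) (sub s r n []) = 0" for n
    proof -
      have "{serve_cost (C n) (zip [] ks) | ks. length ks = length ([]::'a list)} = {0}" by auto
      then have "V (C n) [] = 0" unfolding V_def by simp
      moreover have "sub s r n [] = []" by (simp add: sub_def[OF r1])
      ultimately show ?thesis by simp
    qed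
  then show ?case using \<open>Phi N K c C E \<ge> 0\<close> by simp
next
  case (Cons st rest)
  obtain p k where st: "st = (p, k)" by (cases st)
  have kK: "k \<in> K" using Cons.prems st by auto
  have A: "AA r \<ge> 1" by (rule AA_ge1[OF r1])
  have sc: "serve_cost c (st # rest) = dist (c k) p + serve_cost (c(k := p)) rest" by (simp add: st)
  show ?case
  proof (cases "p = s")
    case True
    have sub: "sub s r n (map fst (st # rest)) = sub s r n (map fst rest)" for n
      using True by (simp add: st sub_def[OF r1])
    have IH: "(\<Sum>n\<in>N. V (C n) (sub s r n (map fst rest))) \<le> 3 * AA r * serve_cost (c(k := p)) rest + Phi N K (c(k := p)) C E"
      using Cons by auto
    have "Phi N K (c(k := p)) C E \<le> Phi N K c C E"
      unfolding Phi_def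
      by (intro sum_mono) (auto simp: True phi_s[OF r1] phi_nonneg[OF r1])
    moreover have "3 * AA r * serve_cost (c(k := p)) rest \<le> 3 * AA r * serve_cost c (st # rest)"
      using A by (simp add: sc)
    ultimately show ?thesis using IH sub by simp
  next
    case False
    define m where "m = sh s r p"
    define x where "x = c k"
    have mN: "m - 1 \<in> N" "m \<in> N" "m + 1 \<in> N" using Cons.prems False by (auto simp: st m_def)
    obtain C' E' cost where invst': "invst s C' E'"
      and oth: "\<forall>n. n \<noteq> m \<longrightarrow> C' n = C n \<and> E' n = E n"
      and Vs: "\<forall>L. V (C m) (p # L) \<le> cost + V (C' m) L"
      and new: "C' m (enc k (E' m k)) = p"
      and othk: "\<forall>k'. k' \<noteq> k \<longrightarrow> C' m (enc k' (E' m k')) = C m (enc k' (E m k'))"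
      and amort: "cost - phi s r m (C m (enc k (E m k))) x \<le> AA r * dist x p"
      using step_choice[OF r1 Cons.prems(1) False m_def, of k x] by blast
    have IH: "(\<Sum>n\<in>N. V (C' n) (sub s r n (map fst rest))) \<le> 3 * AA r * serve_cost (c(k := p)) rest + Phi N K (c(k := p)) C' E'"
      using Cons.IH[OF invst'] Cons.prems by auto
    have "(\<Sum>n\<in>N. V (C n) (sub s r n (map fst (st # rest))))
        \<le> (\<Sum>n\<in>N. V (C' n) (sub s r n (map fst rest)) + (if n = m then cost else 0))"
    proof (rule sum_mono)
      fix n assume "n \<in> N"
      show "V (C n) (sub s r n (map fst (st # rest))) \<le> V (C' n) (sub s r n (map fst rest)) + (if n = m then cost else 0)"
      proof (cases "n = m")
        case True
        then show ?thesis using Vs False by (simp add: st sub_def[OF r1] m_def add.commute)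
      next
        case nm: False
        then show ?thesis using oth by (simp add: st sub_def[OF r1] m_def)
      qed
    qed
    also have "\<dots> = (\<Sum>n\<in>N. V (C' n) (sub s r n (map fst rest))) + cost"
      using mN assms(4) by (simp add: sum.distrib)
    finally have L: "(\<Sum>n\<in>N. V (C n) (sub s r n (map fst (st # rest))))
        \<le> (\<Sum>n\<in>N. V (C' n) (sub s r n (map fst rest))) + cost" .
    define F where "F = (\<lambda>k'. \<Sum>n\<in>N. phi s r n (C n (enc k' (E n k'))) (c k'))"
    define F' where "F' = (\<lambda>k'. \<Sum>n\<in>N. phi s r n (C' n (enc k' (E' n k'))) ((c(k := p)) k'))"
    define d where "d = AA r * dist x p"
    have Fk: "F' k \<le> F k + (3 * d - cost)"
    proof -
      define b where "b = (\<lambda>n. (if n = m then d - cost else 0) + (if n = m - 1 then d else 0) + (if n = m + 1 then d else 0))"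
      have "F' k \<le> (\<Sum>n\<in>N. phi s r n (C n (enc k (E n k))) x + b n)"
        unfolding F'_def
      proof (rule sum_mono)
        fix n assume "n \<in> N"
        show "phi s r n (C' n (enc k (E' n k))) ((c(k := p)) k) \<le> phi s r n (C n (enc k (E n k))) x + b n"
        proof (cases "n = m")
          case True
          have "phi s r m p p = 0" by (rule phi_self[OF r1])
          then show ?thesis using new amort True by (simp add: b_def d_def)
        next
          case nm: False
          have sh: "C' n (enc k (E' n k)) = C n (enc k (E n k))" using oth nm by auto
          show ?thesis
          proof (cases "n = m - 1 \<or> n = m + 1")
            case True
            then show ?thesis using sh nm phi_lip[OF r1, where s=s and n=n and q="C n (enc k (E n k))" and p=p and x=x]
              by (auto simp: b_def d_def)
          next
            case False
            then have "phi s r n (C n (enc k (E n k))) p = 0"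
              using \<open>p \<noteq> s\<close> nm by (intro phi_far[OF r1]) (auto simp: m_def)
            then show ?thesis using sh nm False phi_nonneg[OF r1, where s=s and n=n and q="C n (enc k (E n k))" and c=x]
              by (auto simp: b_def)
          qed
        qed
      qed
      also have "\<dots> = F k + (\<Sum>n\<in>N. b n)"
        by (simp add: sum.distrib F_def x_def)
      also have "(\<Sum>n\<in>N. b n) = 3 * d - cost"
        using mN assms(4) by (simp add: b_def sum.distrib)
      finally show ?thesis .
    qed
    have "(\<Sum>k'\<in>K. F' k') \<le> (\<Sum>k'\<in>K. F k' + (if k' = k then 3 * d - cost else 0))"
    proof (rule sum_mono)
      fix k' assume "k' \<in> K"
      show "F' k' \<le> F k' + (if k' = k then 3 * d - cost else 0)"
      proof (cases "k' = k")
        case True then show ?thesis using Fk by simp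
      next
        case False
        have "C' n (enc k' (E' n k')) = C n (enc k' (E n k'))" for n
          using oth othk False by (cases "n = m") auto
        then show ?thesis using False by (simp add: F_def F'_def)
      qed
    qed
    also have "\<dots> = (\<Sum>k'\<in>K. F k') + (3 * d - cost)"
      using kK assms(3) by (simp add: sum.distrib)
    finally have P: "Phi N K (c(k := p)) C' E' \<le> Phi N K c C E + (3 * d - cost)"
      by (simp add: Phi_def F_def F'_def)
    have "3 * AA r * serve_cost c (st # rest) = 3 * d + 3 * AA r * serve_cost (c(k := p)) rest"
      by (simp add: sc d_def x_def algebra_simps)
    then show ?thesis using L IH P by linarith
  qed
qed

lemma OPT_sum:
  assumes "finite N" "\<forall>p\<in>set \<sigma>. p \<noteq> s \<longrightarrow> sh s r p - 1 \<in> N \<and> sh s r p \<in> N \<and> sh s r p + 1 \<in> N"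
  shows "(\<Sum>n\<in>N. OPT s (sub s r n \<sigma>)) \<le> 3 * AA r * OPT s \<sigma>"
proof -
  have A: "AA r \<ge> 1" by (rule AA_ge1[OF r1])
  have "(\<Sum>n\<in>N. OPT s (sub s r n \<sigma>)) / (3 * AA r) \<le> OPT s \<sigma>"
    unfolding OPT_V[of s \<sigma>] V_def
  proof (rule cInf_greatest[OF V_set_ne], clarify)
    fix ks :: "nat list" assume l: "length ks = length \<sigma>"
    have inv0: "invst s (\<lambda>_ _. s) (\<lambda>_ _. 0)" by (simp add: invst_def[OF r1])
    have "(\<Sum>n\<in>N. V ((\<lambda>_ _. s) n) (sub s r n (map fst (zip \<sigma> ks))))
       \<le> 3 * AA r * serve_cost (\<lambda>_. s) (zip \<sigma> ks) + Phi N (set ks) (\<lambda>_. s) (\<lambda>_ _. s) (\<lambda>_ _. 0)"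
      using assms l by (intro main_ineq[OF inv0]) (auto dest: set_zip_rightD)
    moreover have "Phi N (set ks) (\<lambda>_. s) (\<lambda>_ _. s) (\<lambda>_ _. 0) = 0"
      by (simp add: Phi_def phi_self[OF r1])
    ultimately have "(\<Sum>n\<in>N. OPT s (sub s r n \<sigma>)) \<le> 3 * AA r * schedule_cost s (zip \<sigma> ks)"
      using l by (simp add: OPT_V schedule_cost_def)
    then show "(\<Sum>n\<in>N. OPT s (sub s r n \<sigma>)) / (3 * AA r) \<le> serve_cost (\<lambda>_. s) (zip \<sigma> ks)"
      using A by (simp add: divide_le_eq mult.commute schedule_cost_def)
  qed
  then show ?thesis using A by (simp add: divide_le_eq mult.commute)
qed

end



definition fin :: "(nat \<Rightarrow> 'a) \<Rightarrow> ('a \<times> nat) list \<Rightarrow> nat \<Rightarrow> 'a" where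
  "fin c steps = foldl (\<lambda>c (p, k). c(k := p)) c steps"

lemma serve_cost_snoc: "serve_cost c (xs @ [(p, k)]) = serve_cost c xs + dist (fin c xs k) p"
  by (induction xs arbitrary: c) (auto simp: fin_def)

lemma fin_snoc: "fin c (xs @ [(p, k)]) = (fin c xs)(k := p)"
  by (simp add: fin_def)

lemma length_alg_choices[simp]: "length (alg_choices A \<sigma>) = length \<sigma>"
  by (simp add: alg_choices_def)

lemma alg_choices_snoc: "alg_choices A (\<sigma> @ [p]) = alg_choices A \<sigma> @ [A (\<sigma> @ [p])]"
proof -
  have "map (\<lambda>i. A (take (Suc i) (\<sigma> @ [p]))) [0..<length \<sigma>] = map (\<lambda>i. A (take (Suc i) \<sigma>)) [0..<length \<sigma>]"
    by (rule map_cong) auto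
  then show ?thesis by (simp add: alg_choices_def)
qed

definition finA :: "'a::metric_space \<Rightarrow> 'a online_alg \<Rightarrow> 'a list \<Rightarrow> nat \<Rightarrow> 'a" where
  "finA s A \<sigma> = fin (\<lambda>_. s) (zip \<sigma> (alg_choices A \<sigma>))"

lemma ALG_snoc: "ALG_cost s A (\<sigma> @ [p]) = ALG_cost s A \<sigma> + dist (finA s A \<sigma> (A (\<sigma> @ [p]))) p"
  by (simp add: ALG_cost_def schedule_cost_def alg_choices_snoc serve_cost_snoc finA_def)

lemma finA_snoc: "finA s A (\<sigma> @ [p]) = (finA s A \<sigma>)(A (\<sigma> @ [p]) := p)"
  by (simp add: finA_def alg_choices_snoc fin_snoc)

lemma ALG_nil: "ALG_cost s A [] = 0"
  by (simp add: ALG_cost_def schedule_cost_def alg_choices_def)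

lemma finA_nil: "finA s A [] = (\<lambda>_. s)"
  by (simp add: finA_def alg_choices_def fin_def)

context
  fixes s :: "'a::metric_space" and r :: real
  assumes r1: "1 < r"
begin

definition Acomb :: "(int \<Rightarrow> 'a online_alg) \<Rightarrow> 'a online_alg" where
  "Acomb Aloc \<tau> = (if last \<tau> = s then to_nat (None :: (int \<times> nat) option)
     else to_nat (Some (sh s r (last \<tau>), Aloc (sh s r (last \<tau>)) (sub s r (sh s r (last \<tau>)) \<tau>))))"

lemma sub_snoc: "sub s r n (\<sigma> @ [p]) = sub s r n \<sigma> @ (if p \<noteq> s \<and> sh s r p = n then [p] else [])"
  by (simp add: sub_def[OF r1])

lemma decomp:
  assumes "finite N"
  shows "(\<forall>n k. finA s (Acomb Aloc) \<sigma> (to_nat (Some (n, k))) = finA s (Aloc n) (sub s r n \<sigma>) k)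
    \<and> finA s (Acomb Aloc) \<sigma> (to_nat (None :: (int \<times> nat) option)) = s
    \<and> ((\<forall>p\<in>set \<sigma>. p \<noteq> s \<longrightarrow> sh s r p \<in> N) \<longrightarrow>
        ALG_cost s (Acomb Aloc) \<sigma> = (\<Sum>n\<in>N. ALG_cost s (Aloc n) (sub s r n \<sigma>)))"
proof (induction \<sigma> rule: rev_induct)
  case Nil
  show ?case by (simp add: finA_nil ALG_nil sub_def[OF r1])
next
  case (snoc p \<sigma>)
  define z where "z = to_nat (None :: (int \<times> nat) option)"
  note IH = snoc.IH[folded z_def]
  show ?case
  proof (cases "p = s")
    case True
    have ch: "Acomb Aloc (\<sigma> @ [p]) = z" using True by (simp add: Acomb_def z_def)
    have sb: "sub s r n (\<sigma> @ [p]) = sub s r n \<sigma>" for n using True by (simp add: sub_snoc)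
    have f: "finA s (Acomb Aloc) (\<sigma> @ [p]) = finA s (Acomb Aloc) \<sigma>"
      unfolding finA_snoc ch using IH True by auto
    have c: "ALG_cost s (Acomb Aloc) (\<sigma> @ [p]) = ALG_cost s (Acomb Aloc) \<sigma>"
      unfolding ALG_snoc ch using IH True by simp
    show ?thesis using IH f c sb by (simp add: z_def)
  next
    case False
    define m where "m = sh s r p"
    define k where "k = Aloc m (sub s r m \<sigma> @ [p])"
    define j where "j = to_nat (Some (m, k))"
    have sbm: "sub s r m (\<sigma> @ [p]) = sub s r m \<sigma> @ [p]" using False by (simp add: sub_snoc m_def)
    have sbn: "n \<noteq> m \<Longrightarrow> sub s r n (\<sigma> @ [p]) = sub s r n \<sigma>" for n by (simp add: sub_snoc m_def)
    have ch: "Acomb Aloc (\<sigma> @ [p]) = j" using False sbm by (simp add: Acomb_def j_def k_def m_def)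
    have f: "finA s (Acomb Aloc) (\<sigma> @ [p]) = (finA s (Acomb Aloc) \<sigma>)(j := p)"
      by (simp add: finA_snoc ch)
    have fm: "finA s (Aloc m) (sub s r m (\<sigma> @ [p])) = (finA s (Aloc m) (sub s r m \<sigma>))(k := p)"
      by (simp add: sbm finA_snoc k_def)
    have P1: "\<forall>n k'. finA s (Acomb Aloc) (\<sigma> @ [p]) (to_nat (Some (n, k'))) = finA s (Aloc n) (sub s r n (\<sigma> @ [p])) k'"
    proof (intro allI)
      fix n k'
      show "finA s (Acomb Aloc) (\<sigma> @ [p]) (to_nat (Some (n, k'))) = finA s (Aloc n) (sub s r n (\<sigma> @ [p])) k'"
      proof (cases "n = m")
        case True
        then show ?thesis using IH by (cases "k' = k") (auto simp: f fm j_def)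
      next
        case nm: False
        then show ?thesis using IH by (simp add: f sbn j_def)
      qed
    qed
    have P2: "finA s (Acomb Aloc) (\<sigma> @ [p]) z = s" using IH by (simp add: f j_def z_def)
    have P3: "ALG_cost s (Acomb Aloc) (\<sigma> @ [p]) = (\<Sum>n\<in>N. ALG_cost s (Aloc n) (sub s r n (\<sigma> @ [p])))"
      if hyp: "\<forall>q\<in>set (\<sigma> @ [p]). q \<noteq> s \<longrightarrow> sh s r q \<in> N"
    proof -
      have mN: "m \<in> N" using hyp False by (simp add: m_def)
      define dd where "dd = dist (finA s (Aloc m) (sub s r m \<sigma>) k) p"
      have "ALG_cost s (Acomb Aloc) (\<sigma> @ [p]) = ALG_cost s (Acomb Aloc) \<sigma> + dd"
        using IH by (simp add: ALG_snoc ch j_def dd_def)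
      also have "ALG_cost s (Acomb Aloc) \<sigma> = (\<Sum>n\<in>N. ALG_cost s (Aloc n) (sub s r n \<sigma>))"
        using IH hyp by simp
      also have "(\<Sum>n\<in>N. ALG_cost s (Aloc n) (sub s r n \<sigma>)) + dd
          = (\<Sum>n\<in>N. ALG_cost s (Aloc n) (sub s r n \<sigma>) + (if n = m then dd else 0))"
        using mN assms by (simp add: sum.distrib)
      also have "\<dots> = (\<Sum>n\<in>N. ALG_cost s (Aloc n) (sub s r n (\<sigma> @ [p])))"
      proof (rule sum.cong)
        fix n assume "n \<in> N"
        show "ALG_cost s (Aloc n) (sub s r n \<sigma>) + (if n = m then dd else 0) = ALG_cost s (Aloc n) (sub s r n (\<sigma> @ [p]))"
        proof (cases "n = m")
          case True
          then show ?thesis by (simp add: sbm ALG_snoc dd_def k_def)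
        next
          case nm: False
          then show ?thesis by (simp add: sbn)
        qed
      qed simp
      finally show ?thesis .
    qed
    show ?thesis using P1 P2 P3 by (simp add: z_def)
  qed
qed

end



lemma zero_cost: "(\<forall>x\<in>set (map fst steps). x = s) \<Longrightarrow> (\<forall>k. c k = s) \<Longrightarrow> serve_cost c steps = 0"
proof (induction steps arbitrary: c)
  case (Cons st rest)
  obtain p k where st: "st = (p, k)" by (cases st)
  have ps: "p = s" using Cons.prems(1) st by simp
  have ck: "c k = s" using Cons.prems(2) by blast
  have r: "\<forall>x\<in>set (map fst rest). x = s" using Cons.prems(1) by simp
  have "\<forall>k'. (c(k := p)) k' = s" using Cons.prems(2) ps by simp
  then have "serve_cost (c(k := p)) rest = 0" using r Cons.IH by blast
  then show ?case using ps ck st by simp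
qed simp
lemma all_zip: "\<forall>x\<in>set \<sigma>. x = s \<Longrightarrow> \<forall>x\<in>set (map fst (zip \<sigma> xs)). x = s"
proof
  fix x assume a: "\<forall>x\<in>set \<sigma>. x = s" and "x \<in> set (map fst (zip \<sigma> xs))"
  then obtain y where "(x, y) \<in> set (zip \<sigma> xs)" by auto
  then have "x \<in> set \<sigma>" by (rule set_zip_leftD)
  then show "x = s" using a by blast
qed

lemma OPT_nonneg: "OPT s \<sigma> \<ge> 0" by (simp add: OPT_V V_nonneg)

theorem theorem10:
  fixes M :: "'a::metric_space set" and s :: 'a and r \<rho> :: real
  assumes "s \<in> M" and "r > 1"
    and "\<forall>n::int. \<exists>A. strictly_competitive (shell M s r n) s \<rho> A"
  shows "\<exists>A. strictly_competitive M s ((4 * r - 1) / (r - 1) * \<rho>) A"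
proof (cases "\<rho> \<ge> 0")
  case False
  have Ms: "p = s" if pM: "p \<in> M" for p
  proof (rule ccontr)
    assume ps: "p \<noteq> s"
    define n where "n = sh s r p"
    obtain A where A: "strictly_competitive (shell M s r n) s \<rho> A" using assms(3) by blast
    have "set [p] \<subseteq> shell M s r n"
      using sh_bounds[OF assms(2) ps] pM by (simp add: shell_def n_def)
    then have le: "ALG_cost s A [p] \<le> \<rho> * OPT s [p]" using A by (simp add: strictly_competitive_def)
    have "ALG_cost s A [p] = dist s p" by (simp add: ALG_cost_def schedule_cost_def alg_choices_def)
    moreover have "\<rho> * OPT s [p] \<le> 0" using False OPT_nonneg[of s "[p]"] by (simp add: mult_nonpos_nonneg)
    moreover have "dist s p > 0" using ps by simp
    ultimately show False using le by linarith
  qed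
  show ?thesis
  proof (intro exI[of _ "\<lambda>_. 0"], unfold strictly_competitive_def, intro allI impI)
    fix \<sigma> :: "'a list" assume "set \<sigma> \<subseteq> M"
    then have all: "\<forall>x\<in>set \<sigma>. x = s" using Ms by blast
    have "ALG_cost s (\<lambda>_. 0) \<sigma> = 0" unfolding ALG_cost_def schedule_cost_def
      by (rule zero_cost[OF all_zip[OF all]]) simp
    moreover have "OPT s \<sigma> = 0"
    proof -
      have "OPT s \<sigma> \<le> serve_cost (\<lambda>_. s) (zip \<sigma> (replicate (length \<sigma>) 0))"
        unfolding OPT_V by (rule V_le) simp
      also have "\<dots> = 0" by (rule zero_cost[OF all_zip[OF all]]) simp
      finally show ?thesis using OPT_nonneg[of s \<sigma>] by linarith
    qed
    ultimately show "ALG_cost s (\<lambda>_. 0) \<sigma> \<le> (4 * r - 1) / (r - 1) * \<rho> * OPT s \<sigma>" by simp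
  qed
next
  case True
  note r1 = assms(2)
  define Aloc where "Aloc n = (SOME A. strictly_competitive (shell M s r n) s \<rho> A)" for n
  have hA: "strictly_competitive (shell M s r n) s \<rho> (Aloc n)" for n
    unfolding Aloc_def using assms(3) someI_ex[of "\<lambda>A. strictly_competitive (shell M s r n) s \<rho> A"] by blast
  show ?thesis
  proof (intro exI[of _ "Acomb s r Aloc"], unfold strictly_competitive_def, intro allI impI)
    fix \<sigma> :: "'a list" assume sM: "set \<sigma> \<subseteq> M"
    define S where "S = set \<sigma> - {s}"
    define N where "N = (\<lambda>p. sh s r p - 1) ` S \<union> sh s r ` S \<union> (\<lambda>p. sh s r p + 1) ` S"
    have fN: "finite N" by (simp add: N_def S_def)
    have cN: "\<forall>p\<in>set \<sigma>. p \<noteq> s \<longrightarrow> sh s r p - 1 \<in> N \<and> sh s r p \<in> N \<and> sh s r p + 1 \<in> N"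
      unfolding N_def S_def by blast
    have dec: "ALG_cost s (Acomb s r Aloc) \<sigma> = (\<Sum>n\<in>N. ALG_cost s (Aloc n) (sub s r n \<sigma>))"
    proof -
      have "(\<forall>p\<in>set \<sigma>. p \<noteq> s \<longrightarrow> sh s r p \<in> N) \<longrightarrow> ALG_cost s (Acomb s r Aloc) \<sigma> = (\<Sum>n\<in>N. ALG_cost s (Aloc n) (sub s r n \<sigma>))"
        using decomp[OF r1 fN, where Aloc=Aloc and \<sigma>=\<sigma>] by blast
      moreover have "\<forall>p\<in>set \<sigma>. p \<noteq> s \<longrightarrow> sh s r p \<in> N" using cN by blast
      ultimately show ?thesis by blast
    qed
    also have "\<dots> \<le> (\<Sum>n\<in>N. \<rho> * OPT s (sub s r n \<sigma>))"
    proof (rule sum_mono)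
      fix n assume "n \<in> N"
      have "set (sub s r n \<sigma>) \<subseteq> shell M s r n"
      proof
        fix x assume "x \<in> set (sub s r n \<sigma>)"
        then have x: "x \<in> set \<sigma>" "x \<noteq> s" "sh s r x = n" by (auto simp: sub_def[OF r1])
        then show "x \<in> shell M s r n" using sh_bounds[OF r1 x(2)] sM by (auto simp: shell_def)
      qed
      then show "ALG_cost s (Aloc n) (sub s r n \<sigma>) \<le> \<rho> * OPT s (sub s r n \<sigma>)"
        using hA[of n] by (simp add: strictly_competitive_def)
    qed
    also have "\<dots> = \<rho> * (\<Sum>n\<in>N. OPT s (sub s r n \<sigma>))" by (simp add: sum_distrib_left)
    also have "\<dots> \<le> \<rho> * (3 * AA r * OPT s \<sigma>)"
      using OPT_sum[OF r1 fN cN] True by (intro mult_left_mono) auto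
    also have "\<dots> \<le> (4 * r - 1) / (r - 1) * \<rho> * OPT s \<sigma>"
    proof -
      have "3 * AA r = (3 * r) / (r - 1)" by (simp add: AA_def[OF r1])
      also have "\<dots> \<le> (4 * r - 1) / (r - 1)" using r1 by (intro divide_right_mono) auto
      finally have "3 * AA r \<le> (4 * r - 1) / (r - 1)" .
      moreover have "\<rho> * OPT s \<sigma> \<ge> 0" using True OPT_nonneg[of s \<sigma>] by simp
      ultimately have "3 * AA r * (\<rho> * OPT s \<sigma>) \<le> (4 * r - 1) / (r - 1) * (\<rho> * OPT s \<sigma>)"
        by (intro mult_right_mono) auto
      then show ?thesis by (metis mult.assoc mult.left_commute)
    qed
    finally show "ALG_cost s (Acomb s r Aloc) \<sigma> \<le> (4 * r - 1) / (r - 1) * \<rho> * OPT s \<sigma>" .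
  qed
qed


end
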